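(* Let $R$ be a commutative generalized p.q.-Baer $*$-ring. Then (1) $GC(x)=GC(x^* )$ for every $x\in R$; (2) for $x,y\in R$, if $(xR)^ny=0$ for some $n\in\mathbb N$, then $GC(x)GC(y)=0$.
   Context: A $*$-ring is a ring with an involution; a projection is $e$ with $e=e^*=e^2$; projections are ordered by $e\le f\iff e=ef$. $r_R(S)=\{a\in R: sa=0\ \forall s\in S\}$. $R$ is a generalized p.q.-Baer $*$-ring if for every $x\in R$ there are $n\in\mathbb N$ and a projection $e$ with $r_R((xR)^n)=eR$. For $x\in R$, $GC(x)$ (generalized central cover) is the smallest central projection $e$ such that $x^ne=x^n$ for some $n\in\mathbb N$; it exists for every element of a generalized p.q.-Baer $*$-ring. *)

theory Defs
  imports Main
begin

definition is_involution :: "('a::comm_ring_1 \<Rightarrow> 'a) \<Rightarrow> bool" where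
  "is_involution star \<longleftrightarrow>
     (\<forall>x y. star (x + y) = star x + star y) \<and>
     (\<forall>x y. star (x * y) = star y * star x) \<and>
     (\<forall>x. star (star x) = x)"

definition is_projection :: "('a::comm_ring_1 \<Rightarrow> 'a) \<Rightarrow> 'a \<Rightarrow> bool" where
  "is_projection star e \<longleftrightarrow> e = star e \<and> e = e * e"

definition is_central :: "'a::comm_ring_1 \<Rightarrow> bool" where
  "is_central e \<longleftrightarrow> (\<forall>r. e * r = r * e)"

definition proj_le :: "'a::comm_ring_1 \<Rightarrow> 'a \<Rightarrow> bool" where
  "proj_le e f \<longleftrightarrow> e = e * f"

definition rann :: "'a::comm_ring_1 set \<Rightarrow> 'a set" where
  "rann S = {a. \<forall>s\<in>S. s * a = 0}"

definition rprinc :: "'a::comm_ring_1 \<Rightarrow> 'a set" where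
  "rprinc x = {x * r | r. True}"

inductive_set addclose :: "'a::comm_ring_1 set \<Rightarrow> 'a set" for A where
  zero: "0 \<in> addclose A"
| base: "a \<in> A \<Longrightarrow> a \<in> addclose A"
| add: "a \<in> addclose A \<Longrightarrow> b \<in> addclose A \<Longrightarrow> a + b \<in> addclose A"
| neg: "a \<in> addclose A \<Longrightarrow> - a \<in> addclose A"

definition set_mult :: "'a::comm_ring_1 set \<Rightarrow> 'a set \<Rightarrow> 'a set" where
  "set_mult A B = addclose {a * b | a b. a \<in> A \<and> b \<in> B}"

text \<open>(xR)^n for n \<ge> 1 (the value at 0 is irrelevant and never used).\<close>
fun rpow :: "'a::comm_ring_1 \<Rightarrow> nat \<Rightarrow> 'a set" where
  "rpow x 0 = UNIV"
| "rpow x (Suc 0) = rprinc x"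
| "rpow x (Suc (Suc n)) = set_mult (rpow x (Suc n)) (rprinc x)"

definition gen_pq_baer :: "('a::comm_ring_1 \<Rightarrow> 'a) \<Rightarrow> bool" where
  "gen_pq_baer star \<longleftrightarrow>
     (\<forall>x. \<exists>n\<ge>1. \<exists>e. is_projection star e \<and> rann (rpow x n) = rprinc e)"

definition is_GC :: "('a::comm_ring_1 \<Rightarrow> 'a) \<Rightarrow> 'a \<Rightarrow> 'a \<Rightarrow> bool" where
  "is_GC star x e \<longleftrightarrow>
     is_projection star e \<and> is_central e \<and> (\<exists>n\<ge>1. x ^ n * e = x ^ n) \<and>
     (\<forall>f. is_projection star f \<and> is_central f \<and> (\<exists>n\<ge>1. x ^ n * f = x ^ n)
          \<longrightarrow> proj_le e f)"

definition GC :: "('a::comm_ring_1 \<Rightarrow> 'a) \<Rightarrow> 'a \<Rightarrow> 'a" where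
  "GC star x = (THE e. is_GC star x e)"

end

theory Submission
  imports Defs
begin

lemma addclose_dvd:
  fixes d :: "'a::comm_ring_1"
  assumes "a \<in> addclose A" "\<And>b. b \<in> A \<Longrightarrow> d dvd b"
  shows "d dvd a"
  using assms by (induction rule: addclose.induct) auto

lemma rpow_dvd:
  fixes x :: "'a::comm_ring_1"
  shows "n \<ge> 1 \<Longrightarrow> s \<in> rpow x n \<Longrightarrow> x ^ n dvd s"
proof (induction n arbitrary: s rule: nat_less_induct)
  case (1 n)
  show ?case
  proof (cases n)
    case 0 then show ?thesis using 1 by simp
  next
    case (Suc m)
    show ?thesis
    proof (cases m)
      case 0 then show ?thesis using 1 Suc by (auto simp: rprinc_def)
    next
      case (Suc k)
      have "s \<in> set_mult (rpow x (Suc k)) (rprinc x)" using 1 \<open>n = Suc m\<close> Suc by simp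
      then show ?thesis unfolding set_mult_def
      proof (rule addclose_dvd)
        fix b assume "b \<in> {a * b |a b. a \<in> rpow x (Suc k) \<and> b \<in> rprinc x}"
        then obtain a c where b: "b = a * c" "a \<in> rpow x (Suc k)" "c \<in> rprinc x" by blast
        have "x ^ Suc k dvd a" using 1 b \<open>n = Suc m\<close> Suc by auto
        moreover have "x dvd c" using b by (auto simp: rprinc_def)
        ultimately have "x ^ Suc k * x dvd a * c" by (rule mult_dvd_mono)
        then show "x ^ n dvd b" using b \<open>n = Suc m\<close> Suc by (simp add: mult.commute)
      qed
    qed
  qed
qed

lemma rpow_mem:
  fixes x :: "'a::comm_ring_1"
  shows "n \<ge> 1 \<Longrightarrow> x ^ n \<in> rpow x n"
proof (induction n rule: nat_less_induct)
  case (1 n)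
  show ?case
  proof (cases n)
    case 0 then show ?thesis using 1 by simp
  next
    case (Suc m)
    show ?thesis
    proof (cases m)
      case 0 then show ?thesis using 1 Suc by (auto simp: rprinc_def intro: exI[of _ 1])
    next
      case (Suc k)
      have a: "x ^ Suc k \<in> rpow x (Suc k)" using 1 \<open>n = Suc m\<close> Suc by auto
      have c: "x \<in> rprinc x" by (auto simp: rprinc_def intro: exI[of _ 1])
      have "x ^ Suc k * x \<in> set_mult (rpow x (Suc k)) (rprinc x)"
        unfolding set_mult_def using a c by (blast intro: addclose.base)
      then show ?thesis using \<open>n = Suc m\<close> Suc by (simp add: mult.commute)
    qed
  qed
qed

lemma star_props:
  fixes star :: "'a::comm_ring_1 \<Rightarrow> 'a"
  assumes "is_involution star"
  shows "star (a * b) = star a * star b" "star (star a) = a" "star (a ^ k) = star a ^ k"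
proof -
  show m: "star (a * b) = star a * star b" for a b using assms unfolding is_involution_def
    by (simp add: mult.commute)
  show "star (star a) = a" using assms unfolding is_involution_def by simp
  have one: "star 1 = 1"
  proof -
    have "star (star 1) = star (star 1 * 1)" by simp
    also have "\<dots> = star (star 1) * star 1" by (rule m)
    finally have "1 = 1 * star 1" using assms unfolding is_involution_def by simp
    then show ?thesis by simp
  qed
  show "star (a ^ k) = star a ^ k"
    by (induction k) (simp_all add: one m)
qed

lemma proj_compl:
  fixes star :: "'a::comm_ring_1 \<Rightarrow> 'a"
  assumes inv: "is_involution star" and e: "is_projection star e"
  shows "is_projection star (1 - e)"
proof -
  have ee: "e * e = e" and se: "star e = e" using e unfolding is_projection_def by auto
  have s1: "star 1 = 1" using star_props(3)[OF inv, of _ 0] by simp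
  have add: "star (a + b) = star a + star b" for a b using inv unfolding is_involution_def by blast
  have "star (1 - e) + star e = star 1" using add[of "1 - e" e] by simp
  then have "star (1 - e) = 1 - e" using s1 se by (simp add: eq_diff_eq)
  moreover have "(1 - e) * (1 - e) = 1 - e" using ee by (simp add: algebra_simps)
  ultimately show ?thesis unfolding is_projection_def by simp
qed

lemma GC_key:
  fixes star :: "'a::comm_ring_1 \<Rightarrow> 'a"
  assumes "is_involution star" and "gen_pq_baer star"
  shows "\<exists>g. is_GC star x g \<and> (\<forall>m a. x ^ m * a = 0 \<longrightarrow> g * a = 0)"
proof -
  obtain N e where N: "N \<ge> 1" and e: "is_projection star e" and ann: "rann (rpow x N) = rprinc e"
    using assms(2) unfolding gen_pq_baer_def by blast
  have ee: "e * e = e" and se: "star e = e" using e unfolding is_projection_def by auto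
  have annI: "x ^ N * a = 0 \<Longrightarrow> e * a = a" for a
  proof -
    assume h: "x ^ N * a = 0"
    have "a \<in> rann (rpow x N)" unfolding rann_def
    proof (intro CollectI ballI)
      fix s assume "s \<in> rpow x N"
      then obtain r where "s = x ^ N * r" using rpow_dvd[OF N] by (auto elim!: dvdE)
      then have "s * a = r * (x ^ N * a)" by (simp add: algebra_simps)
      also have "\<dots> = 0" using h by simp
      finally show "s * a = 0" .
    qed
    then obtain r where "a = e * r" using ann by (auto simp: rprinc_def)
    then show "e * a = a" using ee by (simp add: mult.assoc[symmetric])
  qed
  have xe: "x ^ N * e = 0"
  proof -
    have "e \<in> rann (rpow x N)" using ann by (auto simp: rprinc_def intro: exI[of _ 1])
    then show ?thesis using rpow_mem[OF N] unfolding rann_def by blast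
  qed
  have inj: "x ^ k * c = 0 \<Longrightarrow> e * c = 0 \<Longrightarrow> c = 0" for k c
  proof (induction k arbitrary: c)
    case 0 then show ?case by simp
  next
    case (Suc k)
    have "x ^ k * (x * c) = 0" using Suc.prems by (simp add: algebra_simps)
    moreover have "e * (x * c) = 0" using Suc.prems by (simp add: mult.left_commute[of e x c])
    ultimately have xc: "x * c = 0" using Suc.IH by blast
    have "x ^ N = x ^ (N - 1) * x" using N by (simp add: power_Suc2[symmetric])
    then have "x ^ N * c = x ^ (N - 1) * (x * c)" by (simp add: mult.assoc)
    then have "x ^ N * c = 0" using xc by simp
    then have "e * c = c" by (rule annI)
    then show ?case using Suc.prems by simp
  qed
  define g where "g = 1 - e"
  have kill: "x ^ m * a = 0 \<Longrightarrow> g * a = 0" for m a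
  proof -
    assume h: "x ^ m * a = 0"
    have "x ^ m * (g * a) = 0 - x ^ m * e * a" using h unfolding g_def by (simp add: algebra_simps)
    also have "x ^ m * e * a = 0"
    proof (cases "m \<le> N")
      case True
      then have "x ^ N = x ^ (N - m) * x ^ m" by (simp add: power_add[symmetric])
      then have "x ^ N * a = 0" using h by (simp add: mult.assoc)
      then have "e * a = a" by (rule annI)
      then show ?thesis using h by (simp add: mult.assoc)
    next
      case False
      then have "x ^ m = x ^ (m - N) * x ^ N" by (simp add: power_add[symmetric])
      then have "x ^ m * e * a = x ^ (m - N) * (x ^ N * e) * a" by (simp add: mult.assoc mult.left_commute)
      then show ?thesis using xe by simp
    qed
    finally have "x ^ m * (g * a) = 0" by simp
    moreover have "e * (g * a) = 0" unfolding g_def using ee by (simp add: algebra_simps)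
    ultimately show "g * a = 0" by (rule inj)
  qed
  have "is_GC star x g"
    unfolding is_GC_def
  proof (intro conjI allI impI)
    show "is_projection star g" unfolding g_def by (rule proj_compl[OF assms(1) e])
    show "is_central g" unfolding is_central_def by (simp add: mult.commute)
    show "\<exists>n\<ge>1. x ^ n * g = x ^ n" using N xe unfolding g_def by (auto simp: algebra_simps)
    fix f assume "is_projection star f \<and> is_central f \<and> (\<exists>n\<ge>1. x ^ n * f = x ^ n)"
    then obtain n where "x ^ n * f = x ^ n" by blast
    then have "x ^ n * (1 - f) = 0" by (simp add: algebra_simps)
    then have "g * (1 - f) = 0" by (rule kill)
    then show "proj_le g f" unfolding proj_le_def by (simp add: algebra_simps)
  qed
  then show ?thesis using kill by blast
qed

lemma GC_unique:
  assumes "is_GC star x g" "is_GC star x h"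
  shows "g = h"
proof -
  have "proj_le g h" "proj_le h g" using assms unfolding is_GC_def by blast+
  then show ?thesis unfolding proj_le_def by (simp add: mult.commute)
qed

lemma GC_eq:
  assumes "is_GC star x g"
  shows "GC star x = g"
  unfolding GC_def using assms GC_unique by blast

theorem mainTheorem6:
  fixes star :: "'a::comm_ring_1 \<Rightarrow> 'a"
  assumes "is_involution star"
    and "gen_pq_baer star"
  shows "(\<forall>x. GC star x = GC star (star x)) \<and>
         (\<forall>x y. (\<exists>n\<ge>1. \<forall>s\<in>rpow x n. s * y = 0) \<longrightarrow> GC star x * GC star y = 0)"
proof (intro conjI allI impI)
  fix x
  obtain g where g: "is_GC star x g" using GC_key[OF assms] by blast
  have "is_GC star (star x) g"
    unfolding is_GC_def
  proof (intro conjI allI impI)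
    show "is_projection star g" "is_central g" using g unfolding is_GC_def by auto
    have sg: "star g = g" using g unfolding is_GC_def is_projection_def by auto
    obtain n where n: "n \<ge> 1" "x ^ n * g = x ^ n" using g unfolding is_GC_def by blast
    then have "star (x ^ n * g) = star (x ^ n)" by simp
    then have "star x ^ n * g = star x ^ n" using sg by (simp add: star_props[OF assms(1)])
    then show "\<exists>n\<ge>1. star x ^ n * g = star x ^ n" using n by blast
    fix f assume f: "is_projection star f \<and> is_central f \<and> (\<exists>n\<ge>1. star x ^ n * f = star x ^ n)"
    then obtain m where m: "m \<ge> 1" "star x ^ m * f = star x ^ m" by blast
    have sf: "star f = f" using f unfolding is_projection_def by auto
    have "star (star x ^ m * f) = star (star x ^ m)" using m by simp
    then have "x ^ m * f = x ^ m" using sf by (simp add: star_props[OF assms(1)])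
    then show "proj_le g f" using g f m unfolding is_GC_def by blast
  qed
  then have gs: "GC star (star x) = g" by (rule GC_eq)
  then show "GC star x = GC star (star x)" using GC_eq[OF g] by simp
next
  fix x y :: 'a
  assume "\<exists>n\<ge>1. \<forall>s\<in>rpow x n. s * y = 0"
  then obtain n where n: "n \<ge> 1" "\<forall>s\<in>rpow x n. s * y = 0" by blast
  then have xy: "x ^ n * y = 0" using rpow_mem by blast
  obtain g where g: "is_GC star x g" and gk: "\<forall>m a. x ^ m * a = 0 \<longrightarrow> g * a = 0"
    using GC_key[OF assms] by blast
  obtain h where h: "is_GC star y h" using GC_key[OF assms] by blast
  have gy: "g * y = 0" using gk xy by blast
  have pg: "is_projection star g" using g unfolding is_GC_def by auto
  have p1: "is_projection star (1 - g)" by (rule proj_compl[OF assms(1) pg])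
  have "y ^ 1 * (1 - g) = y ^ 1" using gy by (simp add: algebra_simps)
  moreover have "is_central (1 - g)" unfolding is_central_def by (simp add: mult.commute)
  ultimately have "proj_le h (1 - g)" using h p1 unfolding is_GC_def by blast
  then have "h * g = 0" unfolding proj_le_def by (simp add: algebra_simps)
  then show "GC star x * GC star y = 0" using GC_eq[OF g] GC_eq[OF h] by (simp add: mult.commute)
qed

end
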